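(* Under the standing assumptions below, for every $k\in\{0,\dots,n-1\}$: (a) $\prec_k\subseteq\prec_{k+1}$; (b) for all $c,d\in I$, $c\prec_{k+1}d$ implies $c\prec d$ and $\mathrm{var}(c)\setminus X_k\subseteq\mathrm{var}(d)\setminus X_k$; (c) for every $k\in\{0,\dots,n\}$, $\preceq_k$ is a partial order on $I$.
   Context: Standing assumptions: $I$ is a finite set of weighted constraints with default values on a finite domain $D$ such that distinct constraints have distinct variable sets, $\mathcal H(I)=(\mathrm{var}(I),\{\mathrm{var}(c)\mid c\in I\})$ is $\beta$-acyclic, and $(x_1,\dots,x_n)$ is a $\beta$-elimination order of $\mathcal H(I)$ (an enumeration of $\mathrm{var}(I)$ such that for each $k$, $x_{k+1}$ is a nest point—the edges containing it are totally ordered by inclusion—of the hypergraph with vertices $\mathrm{var}(I)\setminus X_k$ and edges $\{e\setminus X_k\}\setminus\{\emptyset\}$). $X_k=\{x_1,\dots,x_k\}$. For $c,d\in I$: $c\prec d$ iff there is $k$ with $\mathrm{var}(c)\setminus X_k\subsetneq\mathrm{var}(d)\setminus X_k$; $c\preceq d$ iff $c\prec d$ or $c=d$. Relations $\prec_k$ are defined inductively: $\prec_0=\emptyset$; $c\prec_{k+1}d$ iff $c\prec_k d$ or there is $e\in I$ with $c\preceq_k e\prec d$ and $x_{k+1}\in\mathrm{var}(d)\cap\mathrm{var}(e)$; here $c\preceq_k d$ iff $c=d$ or $c\prec_k d$. *)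

theory Defs
  imports Main
begin

(* Constraints are abstract elements of type 'c; var c is the variable set
   (scope) of constraint c.  Only scopes matter for the statement. *)

(* X_k = {x_1,...,x_k} for the enumeration xs = [x_1,...,x_n] *)
definition Xk :: "'v list \<Rightarrow> nat \<Rightarrow> 'v set" where
  "Xk xs k = set (take k xs)"

definition nest_point :: "'v set set \<Rightarrow> 'v \<Rightarrow> bool" where
  "nest_point E x \<longleftrightarrow>
     (\<forall>e1\<in>E. \<forall>e2\<in>E. x \<in> e1 \<longrightarrow> x \<in> e2 \<longrightarrow> e1 \<subseteq> e2 \<or> e2 \<subseteq> e1)"

definition beta_elim_order :: "'v set \<Rightarrow> 'v set set \<Rightarrow> 'v list \<Rightarrow> bool" where
  "beta_elim_order V E xs \<longleftrightarrow>
     distinct xs \<and> set xs = V \<and>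
     (\<forall>k < length xs.
        nest_point ({e - Xk xs k | e. e \<in> E} - {{}}) (xs ! k))"

definition var_set :: "('c \<Rightarrow> 'v set) \<Rightarrow> 'c set \<Rightarrow> 'v set" where
  "var_set var I = (\<Union>c\<in>I. var c)"

definition cprec :: "('c \<Rightarrow> 'v set) \<Rightarrow> 'v list \<Rightarrow> 'c \<Rightarrow> 'c \<Rightarrow> bool" where
  "cprec var xs c d \<longleftrightarrow> (\<exists>k. var c - Xk xs k \<subset> var d - Xk xs k)"

(* c \<prec>_k d ; note xs ! k = x_{k+1} *)
primrec cprec_k :: "'c set \<Rightarrow> ('c \<Rightarrow> 'v set) \<Rightarrow> 'v list \<Rightarrow> nat \<Rightarrow> 'c \<Rightarrow> 'c \<Rightarrow> bool" where
  "cprec_k I var xs 0 c d = False"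
| "cprec_k I var xs (Suc k) c d \<longleftrightarrow>
     cprec_k I var xs k c d \<or>
     (\<exists>e\<in>I. (c = e \<or> cprec_k I var xs k c e) \<and> cprec var xs e d \<and>
             xs ! k \<in> var d \<inter> var e)"

definition cpreceq_k :: "'c set \<Rightarrow> ('c \<Rightarrow> 'v set) \<Rightarrow> 'v list \<Rightarrow> nat \<Rightarrow> 'c \<Rightarrow> 'c \<Rightarrow> bool" where
  "cpreceq_k I var xs k c d \<longleftrightarrow> c = d \<or> cprec_k I var xs k c d"

end

theory Submission
  imports Defs
begin

lemma Xk_mono: "j \<le> k \<Longrightarrow> Xk xs j \<subseteq> Xk xs k"
  unfolding Xk_def by (rule set_take_subset_set_take)

lemma incl_mono: "A - Xk xs j \<subseteq> B - Xk xs j \<Longrightarrow> j \<le> k \<Longrightarrow> A - Xk xs k \<subseteq> B - Xk xs k"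
  using Xk_mono[of j k xs] by blast

lemma cprec_trans: "cprec var xs a b \<Longrightarrow> cprec var xs b c \<Longrightarrow> cprec var xs a c"
proof -
  assume "cprec var xs a b" "cprec var xs b c"
  then obtain j1 j2 where 1: "var a - Xk xs j1 \<subset> var b - Xk xs j1"
    and 2: "var b - Xk xs j2 \<subset> var c - Xk xs j2" unfolding cprec_def by blast
  let ?M = "max j1 j2"
  have a: "var a - Xk xs ?M \<subseteq> var b - Xk xs ?M" using incl_mono[of "var a" xs j1 "var b" ?M] 1 by auto
  have b: "var b - Xk xs ?M \<subseteq> var c - Xk xs ?M" using incl_mono[of "var b" xs j2 "var c" ?M] 2 by auto
  have "var a - Xk xs ?M \<noteq> var c - Xk xs ?M"
  proof
    assume eq: "var a - Xk xs ?M = var c - Xk xs ?M"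
    show False
    proof (cases "j1 \<le> j2")
      case True
      then have "?M = j2" by simp
      with 2 a b eq show False by auto
    next
      case False
      then have "?M = j1" by simp
      with 1 a b eq show False by auto
    qed
  qed
  with a b show ?thesis unfolding cprec_def by blast
qed

lemma cprec_irrefl: "\<not> cprec var xs a a"
  unfolding cprec_def by blast

lemma nth_notin_Xk: "distinct xs \<Longrightarrow> n < length xs \<Longrightarrow> j \<le> n \<Longrightarrow> xs ! n \<notin> Xk xs j"
proof
  assume d: "distinct xs" and n: "n < length xs" and j: "j \<le> n" and m: "xs ! n \<in> Xk xs j"
  then have "xs ! n \<in> set (take n xs)" using Xk_mono[of j n xs] by (auto simp: Xk_def)
  then obtain i where "i < length (take n xs)" "take n xs ! i = xs ! n" by (auto simp: in_set_conv_nth)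
  then have "i < n" "xs ! i = xs ! n" by auto
  with d n show False by (simp add: nth_eq_iff_index_eq)
qed

lemma keyK:
  assumes order: "beta_elim_order (var_set var I) (var ` I) xs"
    and n: "n < length xs" and e: "e \<in> I" and d: "d \<in> I"
    and p: "cprec var xs e d" and x: "xs ! n \<in> var d \<inter> var e"
  shows "var e - Xk xs n \<subseteq> var d - Xk xs n"
proof -
  have dist: "distinct xs" and np: "nest_point ({a - Xk xs n | a. a \<in> var ` I} - {{}}) (xs ! n)"
    using order n unfolding beta_elim_order_def by auto
  have nx: "xs ! n \<notin> Xk xs n" using nth_notin_Xk[OF dist n] by simp
  have "var e - Xk xs n \<in> {a - Xk xs n | a. a \<in> var ` I} - {{}}" using e x nx by blast
  moreover have "var d - Xk xs n \<in> {a - Xk xs n | a. a \<in> var ` I} - {{}}" using d x nx by blast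
  ultimately have "var e - Xk xs n \<subseteq> var d - Xk xs n \<or> var d - Xk xs n \<subseteq> var e - Xk xs n"
    using np x nx unfolding nest_point_def by blast
  moreover
  { assume "var d - Xk xs n \<subseteq> var e - Xk xs n" "\<not> var e - Xk xs n \<subseteq> var d - Xk xs n"
    then have "cprec var xs d e" unfolding cprec_def by blast
    with p have False using cprec_trans cprec_irrefl by metis }
  ultimately show ?thesis by blast
qed

lemma lemB:
  assumes order: "beta_elim_order (var_set var I) (var ` I) xs"
  shows "n \<le> length xs \<Longrightarrow> c \<in> I \<Longrightarrow> d \<in> I \<Longrightarrow> cprec_k I var xs n c d \<Longrightarrow>
     cprec var xs c d \<and> var c - Xk xs (n - 1) \<subseteq> var d - Xk xs (n - 1)"
proof (induction n arbitrary: c d)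
  case 0
  then show ?case by simp
next
  case (Suc n)
  then have nl: "n < length xs" by simp
  from Suc.prems(4) show ?case
  proof (elim cprec_k.simps(2)[THEN iffD1, elim_format] disjE)
    assume "cprec_k I var xs n c d"
    with Suc.IH[of c d] Suc.prems nl have "cprec var xs c d" "var c - Xk xs (n - 1) \<subseteq> var d - Xk xs (n - 1)"
      by auto
    then show ?thesis using incl_mono[of "var c" xs "n - 1" "var d" n] by simp
  next
    assume "\<exists>e\<in>I. (c = e \<or> cprec_k I var xs n c e) \<and> cprec var xs e d \<and> xs ! n \<in> var d \<inter> var e"
    then obtain e where e: "e \<in> I" and ce: "c = e \<or> cprec_k I var xs n c e"
      and ed: "cprec var xs e d" and x: "xs ! n \<in> var d \<inter> var e" by blast
    have K: "var e - Xk xs n \<subseteq> var d - Xk xs n" using keyK[OF order nl e Suc.prems(3) ed x] .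
    from ce show ?thesis
    proof
      assume "c = e" then show ?thesis using K ed by simp
    next
      assume "cprec_k I var xs n c e"
      with Suc.IH[of c e] Suc.prems nl e have "cprec var xs c e" "var c - Xk xs (n - 1) \<subseteq> var e - Xk xs (n - 1)"
        by auto
      then show ?thesis using incl_mono[of "var c" xs "n - 1" "var e" n] K ed cprec_trans by fastforce
    qed
  qed
qed

lemma lemT:
  assumes order: "beta_elim_order (var_set var I) (var ` I) xs"
  shows "k \<le> length xs \<Longrightarrow> c \<in> I \<Longrightarrow> d \<in> I \<Longrightarrow> f \<in> I \<Longrightarrow> cprec_k I var xs k c d \<Longrightarrow>
     cprec_k I var xs k d f \<Longrightarrow> cprec_k I var xs k c f"
proof (induction k arbitrary: c d f)
  case 0
  then show ?case by simp
next
  case (Suc k)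
  from Suc.prems(1) have kl: "k < length xs" by simp
  have dist: "distinct xs" using order unfolding beta_elim_order_def by auto
  let ?x = "xs ! k"
  have IH: "\<And>c d f. c \<in> I \<Longrightarrow> d \<in> I \<Longrightarrow> f \<in> I \<Longrightarrow> cprec_k I var xs k c d \<Longrightarrow>
     cprec_k I var xs k d f \<Longrightarrow> cprec_k I var xs k c f" using Suc.IH kl by (meson less_imp_le)
  have B: "\<And>c d. c \<in> I \<Longrightarrow> d \<in> I \<Longrightarrow> cprec_k I var xs k c d \<Longrightarrow>
     cprec var xs c d \<and> var c - Xk xs (k - 1) \<subseteq> var d - Xk xs (k - 1)"
    using lemB[OF order] kl by (meson less_imp_le)
  have nx: "?x \<notin> Xk xs (k - 1)" using nth_notin_Xk[OF dist kl] by simp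
  note cd = Suc.prems(5)[unfolded cprec_k.simps(2)]
  note df = Suc.prems(6)[unfolded cprec_k.simps(2)]
  from cd show ?case
  proof
    assume cd': "cprec_k I var xs k c d"
    from df show ?thesis
    proof
      assume "cprec_k I var xs k d f"
      with IH[of c d f] cd' Suc.prems(2,3,4) have "cprec_k I var xs k c f" by blast
      then show ?thesis by (simp only: cprec_k.simps(2)) blast
    next
      assume "\<exists>e\<in>I. (d = e \<or> cprec_k I var xs k d e) \<and> cprec var xs e f \<and> ?x \<in> var f \<inter> var e"
      then obtain e where "e \<in> I" "d = e \<or> cprec_k I var xs k d e" "cprec var xs e f" "?x \<in> var f \<inter> var e"
        by blast
      then have "e \<in> I" "cprec_k I var xs k c e" "cprec var xs e f" "?x \<in> var f \<inter> var e"
        using IH[of c d e] cd' Suc.prems(2,3) by blast+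
      then show ?thesis by (simp only: cprec_k.simps(2)) blast
    qed
  next
    assume "\<exists>e\<in>I. (c = e \<or> cprec_k I var xs k c e) \<and> cprec var xs e d \<and> ?x \<in> var d \<inter> var e"
    then obtain e where e: "e \<in> I" "c = e \<or> cprec_k I var xs k c e" "cprec var xs e d" "?x \<in> var d \<inter> var e"
      by blast
    from df show ?thesis
    proof
      assume df': "cprec_k I var xs k d f"
      from B[OF Suc.prems(3,4) df'] have "cprec var xs d f" "var d - Xk xs (k - 1) \<subseteq> var f - Xk xs (k - 1)"
        by auto
      then have "cprec var xs e f" "?x \<in> var f" using e(3,4) nx cprec_trans[OF e(3)] by blast+
      then show ?thesis using e(1,2,4) by (simp only: cprec_k.simps(2)) blast
    next
      assume "\<exists>e\<in>I. (d = e \<or> cprec_k I var xs k d e) \<and> cprec var xs e f \<and> ?x \<in> var f \<inter> var e"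
      then obtain e' where e': "e' \<in> I" "d = e' \<or> cprec_k I var xs k d e'" "cprec var xs e' f" "?x \<in> var f \<inter> var e'"
        by blast
      have "cprec var xs d e' \<or> d = e'" using e'(2) B[OF Suc.prems(3) e'(1)] by auto
      then have "cprec var xs e f" using e(3) e'(3) cprec_trans[of var xs e d] cprec_trans[of var xs e e' f] cprec_trans[of var xs d e' f] by blast
      then show ?thesis using e(1,2,4) e'(4) by (simp only: cprec_k.simps(2)) blast
    qed
  qed
qed

theorem lemma4:
  fixes I :: "'c set" and var :: "'c \<Rightarrow> 'v set" and xs :: "'v list"
  assumes finI: "finite I"
    and inj: "inj_on var I"
    and order: "beta_elim_order (var_set var I) (var ` I) xs"
  shows "(\<forall>k < length xs.
            (\<forall>c\<in>I. \<forall>d\<in>I. cprec_k I var xs k c d \<longrightarrow> cprec_k I var xs (Suc k) c d) \<and>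
            (\<forall>c\<in>I. \<forall>d\<in>I. cprec_k I var xs (Suc k) c d \<longrightarrow>
                 cprec var xs c d \<and> var c - Xk xs k \<subseteq> var d - Xk xs k))
       \<and> (\<forall>k \<le> length xs.
            partial_order_on I {(c, d). c \<in> I \<and> d \<in> I \<and> cpreceq_k I var xs k c d})"
proof (intro conjI allI impI ballI)
  fix k c d assume "cprec_k I var xs k c d"
  then show "cprec_k I var xs (Suc k) c d" by (simp only: cprec_k.simps(2)) blast
next
  fix k c d assume k: "k < length xs" and c: "c \<in> I" and d: "d \<in> I"
    and p: "cprec_k I var xs (Suc k) c d"
  have "Suc k \<le> length xs" using k by simp
  from lemB[OF order this c d p]
  show "cprec var xs c d" "var c - Xk xs k \<subseteq> var d - Xk xs k" by simp_all
next
  fix k assume k: "k \<le> length xs"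
  let ?R = "{(c, d). c \<in> I \<and> d \<in> I \<and> cpreceq_k I var xs k c d}"
  have B: "\<And>c d. c \<in> I \<Longrightarrow> d \<in> I \<Longrightarrow> cprec_k I var xs k c d \<Longrightarrow> cprec var xs c d"
    using lemB[OF order k] by blast
  have T: "\<And>c d f. c \<in> I \<Longrightarrow> d \<in> I \<Longrightarrow> f \<in> I \<Longrightarrow> cprec_k I var xs k c d \<Longrightarrow>
     cprec_k I var xs k d f \<Longrightarrow> cprec_k I var xs k c f"
    using lemT[OF order k] by blast
  have "refl_on I ?R" unfolding refl_on_def cpreceq_k_def by blast
  moreover have "trans ?R"
  proof (rule transI)
    fix c d f assume "(c, d) \<in> ?R" "(d, f) \<in> ?R"
    then show "(c, f) \<in> ?R" unfolding cpreceq_k_def using T by blast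
  qed
  moreover have "antisym ?R"
  proof (rule antisymI)
    fix c d assume cd: "(c, d) \<in> ?R" and dc: "(d, c) \<in> ?R"
    show "c = d"
    proof (rule ccontr)
      assume ne: "c \<noteq> d"
      with cd dc have "cprec var xs c d" "cprec var xs d c" unfolding cpreceq_k_def using B by auto
      then have "cprec var xs c c" by (rule cprec_trans)
      then show False by (simp add: cprec_irrefl)
    qed
  qed
  ultimately show "partial_order_on I ?R"
    unfolding partial_order_on_def preorder_on_def by blast
qed

end
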